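(* Let $V$ be a finite set, $M$ a matching on $V$ and $A \subseteq V(M)$ with $A \cap m(A) = \emptyset$. Let $s \ge 0$ be an integer and let $H$ be a graph with vertex set contained in $V$ which is a vertex-disjoint union of non-trivial cliques having in total at least $2|M|+s$ vertices, and such that no edge of $H$ has both endpoints in $A \cup (V \setminus V(M))$. Then $H$ contains a matching of size $s$ each of whose edges has one endpoint in $V(M)\setminus (A \cup m(A))$ and the other endpoint in $A \cup (V\setminus V(M))$.
   Context: For a matching $M$ and $A \subseteq V(M)$, $m(A)$ denotes the set of vertices matched in $M$ to the vertices of $A$. A non-trivial clique is a complete graph on at least $2$ vertices. *)

theory Defs
  imports Main
begin

text \<open>Graphs are represented by edge sets; an edge is a two-element vertex set.\<close>

definition is_edge :: "'a set \<Rightarrow> bool" where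
  "is_edge e \<longleftrightarrow> (\<exists>x y. x \<noteq> y \<and> e = {x, y})"

definition matching :: "'a set set \<Rightarrow> bool" where
  "matching M \<longleftrightarrow> (\<forall>e\<in>M. is_edge e) \<and> (\<forall>e\<in>M. \<forall>f\<in>M. e \<noteq> f \<longrightarrow> e \<inter> f = {})"

definition matching_on :: "'a set \<Rightarrow> 'a set set \<Rightarrow> bool" where
  "matching_on V M \<longleftrightarrow> matching M \<and> (\<forall>e\<in>M. e \<subseteq> V)"

definition matched_verts :: "'a set set \<Rightarrow> 'a set" where
  "matched_verts M = \<Union>M"

definition mate_set :: "'a set set \<Rightarrow> 'a set \<Rightarrow> 'a set" where
  "mate_set M A = {y. \<exists>x\<in>A. {x, y} \<in> M \<and> x \<noteq> y}"

definition union_of_nontrivial_cliques :: "'a set \<Rightarrow> 'a set set \<Rightarrow> bool" where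
  "union_of_nontrivial_cliques W E \<longleftrightarrow>
     (\<exists>\<C>. (\<forall>C\<in>\<C>. finite C \<and> card C \<ge> 2) \<and>
          (\<forall>C\<in>\<C>. \<forall>D\<in>\<C>. C \<noteq> D \<longrightarrow> C \<inter> D = {}) \<and>
          \<Union>\<C> = W \<and>
          E = {{x, y} | x y. x \<noteq> y \<and> (\<exists>C\<in>\<C>. x \<in> C \<and> y \<in> C)})"

end

theory Submission
  imports Defs
begin

theorem lemma2p3:
  fixes V :: "'a set" and M :: "'a set set" and A :: "'a set" and s :: nat
    and W :: "'a set" and E :: "'a set set"
  assumes "finite V"
    and "matching_on V M"
    and "A \<subseteq> matched_verts M"
    and "A \<inter> mate_set M A = {}"
    and "W \<subseteq> V"
    and "union_of_nontrivial_cliques W E"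
    and "card W \<ge> 2 * card M + s"
    and "\<forall>e\<in>E. \<not> e \<subseteq> A \<union> (V - matched_verts M)"
  shows "\<exists>N. N \<subseteq> E \<and> matching N \<and> card N = s \<and>
           (\<forall>e\<in>N. \<exists>x y. e = {x, y} \<and>
              x \<in> matched_verts M - (A \<union> mate_set M A) \<and>
              y \<in> A \<union> (V - matched_verts M))"
proof -
  define VM where "VM = matched_verts M"
  define Y where "Y = mate_set M A"
  define T where "T = A \<union> (V - VM)"
  define X where "X = VM - (A \<union> Y)"
  have Mm: "matching M" and MV: "\<forall>e\<in>M. e \<subseteq> V" using assms(2) unfolding matching_on_def by auto
  have finM: "finite M" proof (rule finite_subset)
    show "M \<subseteq> Pow V" using MV by auto
  qed (use assms(1) in simp)
  have VMV: "VM \<subseteq> V" using MV unfolding VM_def matched_verts_def by auto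
  have finVM: "finite VM" using VMV assms(1) finite_subset by blast
  have finW: "finite W" using assms(1,5) finite_subset by blast
  have YVM: "Y \<subseteq> VM" unfolding Y_def mate_set_def VM_def matched_verts_def by blast
  have cardVM: "card VM \<le> 2 * card M"
  proof -
    have "card VM \<le> sum card M" unfolding VM_def matched_verts_def by (rule card_Union_le_sum_card)
    also have "sum card M = sum (\<lambda>_. 2) M"
    proof (rule sum.cong)
      fix e assume "e \<in> M"
      then have "is_edge e" using Mm unfolding matching_def by auto
      then show "card e = 2" unfolding is_edge_def by auto
    qed simp
    finally show ?thesis by simp
  qed
  have cardA: "card A \<le> card VM" using assms(3) finVM card_mono unfolding VM_def by blast
  have cardY: "card Y \<le> card A"
  proof -
    define f where "f y = (SOME x. x \<in> A \<and> {x, y} \<in> M \<and> x \<noteq> y)" for y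
    have f: "f y \<in> A \<and> {f y, y} \<in> M \<and> f y \<noteq> y" if "y \<in> Y" for y
      unfolding f_def by (rule someI_ex) (use that in \<open>auto simp: Y_def mate_set_def\<close>)
    have "inj_on f Y"
    proof (rule inj_onI)
      fix y y' assume y: "y \<in> Y" "y' \<in> Y" "f y = f y'"
      have h1: "{f y, y} \<in> M" "f y \<noteq> y" using f[OF y(1)] by simp_all
      have h2: "{f y', y'} \<in> M" "f y' \<noteq> y'" using f[OF y(2)] by simp_all
      have h3: "{f y, y'} \<in> M" "f y \<noteq> y'" using h2 y(3) by simp_all
      have ne: "{f y, y} \<inter> {f y, y'} \<noteq> {}" by simp
      have disj: "e \<inter> g = {}" if "e \<in> M" "g \<in> M" "e \<noteq> g" for e g
        using Mm that unfolding matching_def by blast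
      have "{f y, y} = {f y, y'}"
      proof (rule ccontr)
        assume "{f y, y} \<noteq> {f y, y'}"
        then show False using disj[OF h1(1) h3(1)] ne by simp
      qed
      then show "y = y'" using h1(2) h3(2) by (metis doubleton_eq_iff)
    qed
    moreover have "f ` Y \<subseteq> A" using f by auto
    moreover have "finite A" using assms(3) finVM finite_subset unfolding VM_def by auto
    ultimately show ?thesis by (rule card_inj_on_le)
  qed
  have WTXY: "W \<subseteq> T \<union> X \<union> Y" using assms(5) unfolding T_def X_def by blast
  have XT: "X \<inter> T = {}" unfolding X_def T_def using VMV by blast
  obtain CC where CC1: "\<forall>C\<in>CC. finite C \<and> card C \<ge> 2"
    and CC2: "\<forall>C\<in>CC. \<forall>D\<in>CC. C \<noteq> D \<longrightarrow> C \<inter> D = {}"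
    and CC3: "\<Union>CC = W"
    and CC4: "E = {{x, y} | x y. x \<noteq> y \<and> (\<exists>C\<in>CC. x \<in> C \<and> y \<in> C)}"
    using assms(6) unfolding union_of_nontrivial_cliques_def by blast
  have finCC: "finite CC" using CC3 finW by (simp add: finite_UnionD)
  have edge: "{a, b} \<in> E" if "C \<in> CC" "a \<in> C" "b \<in> C" "a \<noteq> b" for C a b
    using that CC4 by blast
  have Tone: "a = b" if "C \<in> CC" "a \<in> C" "b \<in> C" "a \<in> T" "b \<in> T" for C a b
  proof (rule ccontr)
    assume "a \<noteq> b"
    then have "{a, b} \<in> E" using edge that by blast
    moreover have "{a, b} \<subseteq> A \<union> (V - matched_verts M)" using that unfolding T_def VM_def by simp
    ultimately show False using assms(8) by blast
  qed
  have dis: "C = D" if "C \<in> CC" "D \<in> CC" "a \<in> C" "a \<in> D" for C D a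
    using CC2 that by blast
  define cl where "cl t = (SOME C. C \<in> CC \<and> t \<in> C)" for t
  have cl: "cl t \<in> CC \<and> t \<in> cl t" if "t \<in> W" for t
    unfolding cl_def by (rule someI_ex) (use that CC3 in blast)
  define G where "G = {C\<in>CC. C \<inter> T \<noteq> {} \<and> C \<inter> X \<noteq> {}}"
  have finG: "finite G" using finCC unfolding G_def by simp
  define T1 where "T1 = {t\<in>W\<inter>T. cl t \<inter> X \<noteq> {}}"
  define T2 where "T2 = {t\<in>W\<inter>T. cl t \<inter> X = {}}"
  have cT1: "card T1 \<le> card G"
  proof -
    have "inj_on cl T1"
    proof (rule inj_onI)
      fix a b assume "a \<in> T1" "b \<in> T1" "cl a = cl b"
      then show "a = b" using cl Tone unfolding T1_def by (metis (no_types, lifting) IntD1 IntD2 mem_Collect_eq)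
    qed
    moreover have "cl ` T1 \<subseteq> G" unfolding T1_def G_def using cl by blast
    ultimately show ?thesis using card_inj_on_le finG by blast
  qed
  have cT2: "card T2 \<le> card Y"
  proof -
    define g where "g t = (SOME y. y \<in> cl t \<inter> Y)" for t
    have g: "g t \<in> cl t \<inter> Y" if "t \<in> T2" for t
    proof -
      have t: "t \<in> W" "t \<in> T" "cl t \<in> CC" "t \<in> cl t" "cl t \<inter> X = {}"
        using that cl unfolding T2_def by auto
      have "\<exists>u\<in>cl t. u \<noteq> t"
      proof (rule ccontr)
        assume "\<not> ?thesis"
        then have "cl t \<subseteq> {t}" by blast
        then have "card (cl t) \<le> 1" using card_mono[of "{t}" "cl t"] by simp
        then show False using CC1 t(3) by fastforce
      qed
      then obtain u where u: "u \<in> cl t" "u \<noteq> t" by blast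
      have "u \<in> W" using u t CC3 by blast
      moreover have "u \<notin> T" using Tone t u by blast
      moreover have "u \<notin> X" using t u by blast
      ultimately have "u \<in> cl t \<inter> Y" using WTXY u by blast
      then show ?thesis unfolding g_def by (rule someI)
    qed
    have "inj_on g T2"
    proof (rule inj_onI)
      fix a b assume ab: "a \<in> T2" "b \<in> T2" "g a = g b"
      then have "cl a = cl b" using g cl dis unfolding T2_def
        by (metis (no_types, lifting) IntD1 IntE mem_Collect_eq)
      then show "a = b" using ab cl Tone unfolding T2_def by (metis (no_types, lifting) IntD1 IntD2 mem_Collect_eq)
    qed
    moreover have "g ` T2 \<subseteq> Y" using g by blast
    moreover have "finite Y" using YVM finVM finite_subset by blast
    ultimately show ?thesis using card_inj_on_le by blast
  qed
  have "W \<inter> T = T1 \<union> T2" unfolding T1_def T2_def by blast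
  then have cWT: "card (W \<inter> T) \<le> card T1 + card T2" by (metis card_Un_le)
  have "W = (W \<inter> T) \<union> (W \<inter> X) \<union> (W \<inter> Y)" using WTXY by blast
  then have cW: "card W \<le> card (W \<inter> T) + card (W \<inter> X) + card (W \<inter> Y)"
    by (metis add_right_mono card_Un_le order_trans)
  have finX: "finite X" using finVM unfolding X_def by simp
  have finY: "finite Y" using YVM finVM finite_subset by blast
  have "card (W \<inter> X) \<le> card X" using finX by (simp add: card_mono)
  moreover have "card (W \<inter> Y) \<le> card Y" using finY by (simp add: card_mono)
  moreover have "card X + card Y = card (X \<union> Y)"
    using finX finY by (subst card_Un_disjoint) (auto simp: X_def)
  moreover have "X \<union> Y \<subseteq> VM - A" using YVM assms(4) unfolding X_def Y_def by blast
  then have "card (X \<union> Y) \<le> card (VM - A)" using finVM by (simp add: card_mono)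
  moreover have "card (VM - A) = card VM - card A"
    using assms(3) finVM finite_subset unfolding VM_def by (metis card_Diff_subset)
  ultimately have sG: "s \<le> card G" using cW cWT cT1 cT2 cardVM cardA cardY assms(7) by linarith
  obtain G' where G': "G' \<subseteq> G" "card G' = s" "finite G'"
    using obtain_subset_with_card_n[OF sG] by blast
  define xs where "xs C = (SOME x. x \<in> C \<inter> X)" for C
  define ts where "ts C = (SOME x. x \<in> C \<inter> T)" for C
  have xt: "xs C \<in> C \<inter> X \<and> ts C \<in> C \<inter> T \<and> C \<in> CC" if "C \<in> G'" for C
  proof -
    have "C \<in> G" using that G' by blast
    then have "C \<inter> X \<noteq> {}" "C \<inter> T \<noteq> {}" "C \<in> CC" unfolding G_def by auto
    then show ?thesis unfolding xs_def ts_def by (metis ex_in_conv someI)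
  qed
  define N where "N = (\<lambda>C. {xs C, ts C}) ` G'"
  have xX: "xs C \<in> X" "xs C \<in> C" "ts C \<in> T" "ts C \<in> C" "C \<in> CC" if "C \<in> G'" for C
    using xt[OF that] by auto
  have xne: "xs C \<noteq> ts D" if "C \<in> G'" "D \<in> G'" for C D
  proof
    assume "xs C = ts D"
    then have "xs C \<in> X \<inter> T" using xX[OF that(1)] xX[OF that(2)] by simp
    then show False using XT by simp
  qed
  have inj: "inj_on (\<lambda>C. {xs C, ts C}) G'"
  proof (rule inj_onI)
    fix C D assume CD: "C \<in> G'" "D \<in> G'" "{xs C, ts C} = {xs D, ts D}"
    have "xs C \<in> {xs D, ts D}" using CD(3) by (metis insertI1)
    moreover have "xs C \<noteq> ts D" using xne CD by simp
    ultimately have "xs C = xs D" by simp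
    then have "xs C \<in> D" using xX[OF CD(2)] by simp
    then show "C = D" using xX[OF CD(1)] xX[OF CD(2)] dis by simp
  qed
  have "N \<subseteq> E"
  proof
    fix e assume "e \<in> N"
    then obtain C where C: "C \<in> G'" "e = {xs C, ts C}" unfolding N_def by blast
    have "xs C \<noteq> ts C" using xne C(1) by simp
    then show "e \<in> E" using xX[OF C(1)] edge C(2) by simp
  qed
  moreover have "matching N"
    unfolding matching_def
  proof (intro conjI ballI impI)
    fix e assume "e \<in> N"
    then obtain C where C: "C \<in> G'" "e = {xs C, ts C}" unfolding N_def by blast
    have "xs C \<noteq> ts C" using xne C(1) by simp
    then show "is_edge e" unfolding is_edge_def using C(2) by blast
  next
    fix e f assume "e \<in> N" "f \<in> N" "e \<noteq> f"
    then obtain C D where CD: "C \<in> G'" "e = {xs C, ts C}" "D \<in> G'" "f = {xs D, ts D}" "C \<noteq> D"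
      unfolding N_def by blast
    have "e \<subseteq> C" "f \<subseteq> D" using xX[OF CD(1)] xX[OF CD(3)] CD(2,4) by auto
    moreover have "C \<inter> D = {}" using CC2 xX[OF CD(1)] xX[OF CD(3)] CD(5) by simp
    ultimately show "e \<inter> f = {}" by blast
  qed
  moreover have "card N = s" unfolding N_def using card_image[OF inj] G' by simp
  moreover have "\<forall>e\<in>N. \<exists>x y. e = {x, y} \<and>
              x \<in> matched_verts M - (A \<union> mate_set M A) \<and>
              y \<in> A \<union> (V - matched_verts M)"
  proof
    fix e assume "e \<in> N"
    then obtain C where C: "C \<in> G'" "e = {xs C, ts C}" unfolding N_def by blast
    have "xs C \<in> matched_verts M - (A \<union> mate_set M A)"
      using xX(1)[OF C(1)] unfolding X_def VM_def Y_def .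
    moreover have "ts C \<in> A \<union> (V - matched_verts M)"
      using xX(3)[OF C(1)] unfolding T_def VM_def .
    ultimately show "\<exists>x y. e = {x, y} \<and>
              x \<in> matched_verts M - (A \<union> mate_set M A) \<and>
              y \<in> A \<union> (V - matched_verts M)"
      using C(2) by blast
  qed
  ultimately show ?thesis by blast
qed

end
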